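(* Let $Q$ be a quantity space over a field $K$ with a basis $E=\{e_1,\ldots,e_n\}$. Then $\mathsf{E}=\{[e_1],\ldots,[e_n]\}$ is a basis for the abelian group $Q/{\sim}$, and $\mathsf{E}$ has the same cardinality as $E$.
   Context: A scalable monoid over a (unital, associative) ring $R$ is a monoid $X$ (identity $1_X$, product written $xy$) together with a map $R\times X\to X$, $(\alpha,x)\mapsto\alpha\cdot x$, such that $1\cdot x=x$, $\alpha\cdot(\beta\cdot x)=\alpha\beta\cdot x$ and $\alpha\cdot(xy)=(\alpha\cdot x)y=x(\alpha\cdot y)$. A quantity space over a field $K$ is a commutative scalable monoid $Q$ over $K$ for which there exists a finite set $\{e_1,\ldots,e_n\}$ of invertible elements of $Q$ (a basis) such that every $x\in Q$ has a unique expansion $x=\mu\cdot\prod_{i=1}^n e_i^{k_i}$ with $\mu\in K$, $k_i\in\mathbb{Z}$. On $Q$, $x\sim y$ means $\alpha\cdot x=\beta\cdot y$ for some $\alpha,\beta\in K$; $[x]$ is the equivalence class of $x$, and $Q/{\sim}$ is the set of classes with $[x][y]=[xy]$, which is an abelian group. A basis of a finitely generated abelian group $G$ is a set $\{\varepsilon_1,\ldots,\varepsilon_n\}\subseteq G$ such that every $g\in G$ has a unique expansion $g=\prod_{i=1}^n\varepsilon_i^{k_i}$ with $k_i\in\mathbb{Z}$. *)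

theory Defs
  imports "HOL-Algebra.Algebra"
begin

definition scalable_monoid :: "('q, 'b) monoid_scheme \<Rightarrow> ('k::ring_1 \<Rightarrow> 'q \<Rightarrow> 'q) \<Rightarrow> bool" where
  "scalable_monoid Q smul \<longleftrightarrow> monoid Q \<and>
     (\<forall>\<alpha> x. x \<in> carrier Q \<longrightarrow> smul \<alpha> x \<in> carrier Q) \<and>
     (\<forall>x \<in> carrier Q. smul 1 x = x) \<and>
     (\<forall>\<alpha> \<beta>. \<forall>x \<in> carrier Q. smul \<alpha> (smul \<beta> x) = smul (\<alpha> * \<beta>) x) \<and>
     (\<forall>\<alpha>. \<forall>x \<in> carrier Q. \<forall>y \<in> carrier Q.
        smul \<alpha> (x \<otimes>\<^bsub>Q\<^esub> y) = smul \<alpha> x \<otimes>\<^bsub>Q\<^esub> y \<and>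
        smul \<alpha> (x \<otimes>\<^bsub>Q\<^esub> y) = x \<otimes>\<^bsub>Q\<^esub> smul \<alpha> y)"

definition qs_basis :: "('q, 'b) monoid_scheme \<Rightarrow> ('k::field \<Rightarrow> 'q \<Rightarrow> 'q) \<Rightarrow> 'q set \<Rightarrow> bool" where
  "qs_basis Q smul E \<longleftrightarrow> finite E \<and> E \<subseteq> Units Q \<and>
     (\<forall>x \<in> carrier Q. \<exists>!(\<mu>, k). k \<in> E \<rightarrow>\<^sub>E (UNIV :: int set) \<and>
         x = smul \<mu> (finprod Q (\<lambda>e. e [^]\<^bsub>Q\<^esub> (k e :: int)) E))"

definition quantity_space :: "('q, 'b) monoid_scheme \<Rightarrow> ('k::field \<Rightarrow> 'q \<Rightarrow> 'q) \<Rightarrow> bool" where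
  "quantity_space Q smul \<longleftrightarrow> comm_monoid Q \<and> scalable_monoid Q smul \<and> (\<exists>E. qs_basis Q smul E)"

definition qequiv :: "('q, 'b) monoid_scheme \<Rightarrow> ('k::field \<Rightarrow> 'q \<Rightarrow> 'q) \<Rightarrow> 'q \<Rightarrow> 'q \<Rightarrow> bool" where
  "qequiv Q smul x y \<longleftrightarrow> (\<exists>\<alpha> \<beta>. smul \<alpha> x = smul \<beta> y)"

definition qcls :: "('q, 'b) monoid_scheme \<Rightarrow> ('k::field \<Rightarrow> 'q \<Rightarrow> 'q) \<Rightarrow> 'q \<Rightarrow> 'q set" where
  "qcls Q smul x = {y \<in> carrier Q. qequiv Q smul x y}"

definition qquot :: "('q, 'b) monoid_scheme \<Rightarrow> ('k::field \<Rightarrow> 'q \<Rightarrow> 'q) \<Rightarrow> 'q set monoid" where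
  "qquot Q smul = \<lparr> carrier = qcls Q smul ` carrier Q,
     monoid.mult = (\<lambda>A B. qcls Q smul ((SOME x. x \<in> A) \<otimes>\<^bsub>Q\<^esub> (SOME y. y \<in> B))),
     one = qcls Q smul \<one>\<^bsub>Q\<^esub> \<rparr>"

definition group_basis :: "('g, 'b) monoid_scheme \<Rightarrow> 'g set \<Rightarrow> bool" where
  "group_basis G B \<longleftrightarrow> finite B \<and> B \<subseteq> carrier G \<and>
     (\<forall>g \<in> carrier G. \<exists>!k. k \<in> B \<rightarrow>\<^sub>E (UNIV :: int set) \<and>
         g = finprod G (\<lambda>b. b [^]\<^bsub>G\<^esub> (k b :: int)) B)"

end

theory Submission
  imports Defs
begin

locale qsp = comm_monoid Q for Q :: "'q monoid" (structure) +
  fixes smul :: "'k::field \<Rightarrow> 'q \<Rightarrow> 'q" and E :: "'q set"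
  assumes sm: "scalable_monoid Q smul" and bas: "qs_basis Q smul E"
begin

lemma smul_closed: "x \<in> carrier Q \<Longrightarrow> smul a x \<in> carrier Q"
  using sm by (simp add: scalable_monoid_def)
lemma smul_one: "x \<in> carrier Q \<Longrightarrow> smul 1 x = x"
  using sm by (simp add: scalable_monoid_def)
lemma smul_smul: "x \<in> carrier Q \<Longrightarrow> smul a (smul b x) = smul (a*b) x"
  using sm by (simp add: scalable_monoid_def)
lemma smul_mult_r: "x \<in> carrier Q \<Longrightarrow> y \<in> carrier Q \<Longrightarrow> smul a (x \<otimes> y) = x \<otimes> smul a y"
  using sm unfolding scalable_monoid_def by blast
lemma smul_mult_l: "x \<in> carrier Q \<Longrightarrow> y \<in> carrier Q \<Longrightarrow> smul a (x \<otimes> y) = smul a x \<otimes> y"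
  using sm by (simp add: scalable_monoid_def)

lemma smul_mult: "x \<in> carrier Q \<Longrightarrow> y \<in> carrier Q \<Longrightarrow> smul a x \<otimes> smul b y = smul (a*b) (x \<otimes> y)"
proof -
  assume x: "x \<in> carrier Q" and y: "y \<in> carrier Q"
  have "smul a x \<otimes> smul b y = smul b (smul a x \<otimes> y)"
    using smul_mult_r[of "smul a x" y b] x y smul_closed by simp
  also have "\<dots> = smul b (smul a (x \<otimes> y))" using smul_mult_l x y by simp
  also have "\<dots> = smul (a*b) (x \<otimes> y)" using smul_smul x y by (simp add: mult.commute)
  finally show ?thesis .
qed

lemma finE: "finite E" using bas by (simp add: qs_basis_def)
lemma EU: "E \<subseteq> Units Q" using bas by (simp add: qs_basis_def)
lemma Ecar: "E \<subseteq> carrier Q" using EU Units_def by auto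

definition P :: "('q \<Rightarrow> int) \<Rightarrow> 'q" where
  "P k = finprod Q (\<lambda>e. e [^] (k e)) E"

lemma uniqueQ: "x \<in> carrier Q \<Longrightarrow> \<exists>!(\<mu>, k). k \<in> E \<rightarrow>\<^sub>E (UNIV :: int set) \<and> x = smul \<mu> (P k)"
  using bas unfolding qs_basis_def P_def by blast

interpretation U: comm_group "units_of Q" by (rule units_comm_group)

lemma pow_nat_units: "u [^]\<^bsub>Q\<^esub> (n::nat) = u [^]\<^bsub>units_of Q\<^esub> n"
  by (induction n) (simp_all add: units_of_mult units_of_one)

lemma pow_units: assumes "u \<in> Units Q" shows "u [^]\<^bsub>Q\<^esub> (i::int) = u [^]\<^bsub>units_of Q\<^esub> i"
proof -
  have c: "u [^]\<^bsub>units_of Q\<^esub> (n::nat) \<in> Units Q" for n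
    using U.nat_pow_closed[of u n] assms by (simp add: units_of_carrier)
  have "inv\<^bsub>units_of Q\<^esub> (u [^]\<^bsub>units_of Q\<^esub> (nat (-i))) = inv (u [^]\<^bsub>units_of Q\<^esub> (nat (-i)))"
    using units_of_inv[OF c] by blast
  then show ?thesis
    unfolding int_pow_def2 pow_nat_units by (simp del: pow_nat)
qed

lemma upow_Units: "u \<in> Units Q \<Longrightarrow> u [^]\<^bsub>Q\<^esub> (i::int) \<in> Units Q"
  using pow_units U.int_pow_closed by (simp add: units_of_carrier)

lemma upow_add: "u \<in> Units Q \<Longrightarrow> u [^]\<^bsub>Q\<^esub> (i::int) \<otimes> u [^]\<^bsub>Q\<^esub> j = u [^]\<^bsub>Q\<^esub> (i+j)"
  using pow_units U.int_pow_mult[of u i j] by (simp add: units_of_carrier units_of_mult)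

lemma upow_1: "u \<in> Units Q \<Longrightarrow> u [^]\<^bsub>Q\<^esub> (1::int) = u"
  using pow_units U.int_pow_1[of u] by (simp add: units_of_carrier)

lemma fun_car: "(\<lambda>e. e [^]\<^bsub>Q\<^esub> (k e::int)) \<in> E \<rightarrow> carrier Q"
  using upow_Units EU Units_closed by blast

lemma P_closed: "P k \<in> carrier Q"
  unfolding P_def using fun_car by simp

lemma P_cong: "(\<And>e. e \<in> E \<Longrightarrow> k e = l e) \<Longrightarrow> P k = P l"
  unfolding P_def by (rule finprod_cong') (use fun_car in auto)

lemma P_add: "P k \<otimes> P l = P (\<lambda>e. k e + l e)"
proof -
  have "P k \<otimes> P l = finprod Q (\<lambda>e. e [^] (k e) \<otimes> e [^] (l e)) E"
    unfolding P_def using fun_car by simp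
  also have "\<dots> = P (\<lambda>e. k e + l e)"
    unfolding P_def by (rule finprod_cong') (use fun_car upow_add EU in auto)
  finally show ?thesis .
qed

lemma P_zero: "P (\<lambda>e. 0) = \<one>"
  unfolding P_def by simp

lemma P_delta: assumes "e \<in> E" shows "P (\<lambda>x. if x = e then 1 else 0) = e"
proof -
  have "P (\<lambda>x. if x = e then 1 else 0) = (\<Otimes>j\<in>E. if e = j then j else \<one>)"
    unfolding P_def by (rule finprod_cong') (use Ecar upow_1 EU in auto)
  also have "\<dots> = e" using finprod_singleton[of e E "\<lambda>x. x"] assms finE Ecar by auto
  finally show ?thesis .
qed

lemma uniq:
  assumes k: "k \<in> E \<rightarrow>\<^sub>E (UNIV :: int set)" and l: "l \<in> E \<rightarrow>\<^sub>E (UNIV :: int set)"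
    and eq: "smul \<mu> (P k) = smul \<nu> (P l)"
  shows "k = l"
proof -
  have "smul \<mu> (P k) \<in> carrier Q" using smul_closed P_closed by blast
  from uniqueQ[OF this] obtain p where
    p: "\<And>q. (case q of (a, b) \<Rightarrow> b \<in> E \<rightarrow>\<^sub>E (UNIV :: int set) \<and> smul \<mu> (P k) = smul a (P b)) \<Longrightarrow> q = p"
    unfolding Ex1_def by blast
  have "(\<mu>, k) = p" by (rule p) (simp add: k)
  moreover have "(\<nu>, l) = p" by (rule p) (simp add: l eq)
  ultimately show ?thesis by (metis prod.inject)
qed

definition phi :: "'q \<Rightarrow> 'q \<Rightarrow> int" where
  "phi x = (SOME k. k \<in> E \<rightarrow>\<^sub>E (UNIV :: int set) \<and> (\<exists>\<mu>. x = smul \<mu> (P k)))"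

lemma phi: assumes "x \<in> carrier Q"
  shows "phi x \<in> E \<rightarrow>\<^sub>E (UNIV :: int set) \<and> (\<exists>\<mu>. x = smul \<mu> (P (phi x)))"
proof -
  have "\<exists>k. k \<in> E \<rightarrow>\<^sub>E (UNIV :: int set) \<and> (\<exists>\<mu>. x = smul \<mu> (P k))"
    using uniqueQ[OF assms] by auto
  then show ?thesis unfolding phi_def by (rule someI_ex)
qed

lemma phi_eq: assumes k: "k \<in> E \<rightarrow>\<^sub>E (UNIV :: int set)" shows "phi (smul \<mu> (P k)) = k"
proof -
  have c: "smul \<mu> (P k) \<in> carrier Q" using smul_closed P_closed by blast
  from phi[OF c] obtain \<nu> where eq: "smul \<mu> (P k) = smul \<nu> (P (phi (smul \<mu> (P k))))"
    and mem: "phi (smul \<mu> (P k)) \<in> E \<rightarrow>\<^sub>E (UNIV :: int set)" by blast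
  show ?thesis using uniq[OF k mem eq] by simp
qed

lemma phi_smul: assumes "x \<in> carrier Q" shows "phi (smul a x) = phi x"
proof -
  from phi[OF assms] obtain \<mu> where m: "x = smul \<mu> (P (phi x))" and k: "phi x \<in> E \<rightarrow>\<^sub>E (UNIV :: int set)" by blast
  have "smul a x = smul a (smul \<mu> (P (phi x)))" by (rule arg_cong[OF m])
  also have "\<dots> = smul (a*\<mu>) (P (phi x))" by (rule smul_smul[OF P_closed])
  finally have "smul a x = smul (a*\<mu>) (P (phi x))" .
  then show ?thesis using phi_eq[OF k] by simp
qed

lemma phi_mult: assumes x: "x \<in> carrier Q" and y: "y \<in> carrier Q"
  shows "phi (x \<otimes> y) = (\<lambda>e\<in>E. phi x e + phi y e)"
proof -
  from phi[OF x] obtain \<mu> where m: "x = smul \<mu> (P (phi x))" by blast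
  from phi[OF y] obtain \<nu> where n: "y = smul \<nu> (P (phi y))" by blast
  have "x \<otimes> y = smul \<mu> (P (phi x)) \<otimes> smul \<nu> (P (phi y))"
    by (rule arg_cong2[OF m n])
  also have "\<dots> = smul (\<mu>*\<nu>) (P (phi x) \<otimes> P (phi y))"
    by (rule smul_mult[OF P_closed P_closed])
  also have "\<dots> = smul (\<mu>*\<nu>) (P (\<lambda>e\<in>E. phi x e + phi y e))"
    using P_add P_cong[of "\<lambda>e. phi x e + phi y e" "\<lambda>e\<in>E. phi x e + phi y e"] by simp
  finally show ?thesis using phi_eq by simp
qed

lemma phi_one: "phi \<one> = (\<lambda>e\<in>E. 0)"
proof -
  have "\<one> = smul 1 (P (\<lambda>e\<in>E. 0))" using P_zero P_cong[of "\<lambda>e\<in>E. 0" "\<lambda>e. 0"] smul_one by simp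
  then show ?thesis using phi_eq by simp
qed

lemma phi_P: "phi (P k) = (\<lambda>e\<in>E. k e)"
proof -
  have "P k = smul 1 (P (\<lambda>e\<in>E. k e))" using P_cong[of "\<lambda>e\<in>E. k e" k] smul_one P_closed by simp
  then show ?thesis using phi_eq by simp
qed

lemma qequiv_iff: assumes x: "x \<in> carrier Q" and y: "y \<in> carrier Q"
  shows "qequiv Q smul x y \<longleftrightarrow> phi x = phi y"
proof
  assume "qequiv Q smul x y"
  then obtain a b where "smul a x = smul b y" unfolding qequiv_def by blast
  then show "phi x = phi y" using phi_smul x y by metis
next
  assume eq: "phi x = phi y"
  from phi[OF x] obtain \<mu> where m: "x = smul \<mu> (P (phi x))" by blast
  from phi[OF y] obtain \<nu> where n: "y = smul \<nu> (P (phi y))" by blast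
  have "smul 0 x = smul 0 (smul \<mu> (P (phi x)))" by (rule arg_cong[OF m])
  also have "\<dots> = smul 0 (P (phi x))" using smul_smul[OF P_closed] by simp
  finally have 1: "smul 0 x = smul 0 (P (phi x))" .
  have "smul 0 y = smul 0 (smul \<nu> (P (phi y)))" by (rule arg_cong[OF n])
  also have "\<dots> = smul 0 (P (phi x))" using smul_smul[OF P_closed] eq by simp
  finally have 2: "smul 0 y = smul 0 (P (phi x))" .
  from 1 2 have "smul 0 x = smul 0 y" by simp
  then show "qequiv Q smul x y" unfolding qequiv_def by blast
qed

lemma qcls_eq: assumes x: "x \<in> carrier Q" shows "qcls Q smul x = {y \<in> carrier Q. phi y = phi x}"
  unfolding qcls_def
proof (rule Collect_cong)
  fix y show "(y \<in> carrier Q \<and> qequiv Q smul x y) = (y \<in> carrier Q \<and> phi y = phi x)"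
    using qequiv_iff[OF x, of y] by auto
qed

lemma qcls_mem: "x \<in> carrier Q \<Longrightarrow> x \<in> qcls Q smul x"
  by (simp add: qcls_eq)

lemma qcls_eq_iff: assumes x: "x \<in> carrier Q" and y: "y \<in> carrier Q"
  shows "qcls Q smul x = qcls Q smul y \<longleftrightarrow> phi x = phi y"
proof
  assume "qcls Q smul x = qcls Q smul y"
  then have "y \<in> qcls Q smul x" using qcls_mem[OF y] by simp
  then show "phi x = phi y" using qcls_eq[OF x] by simp
next
  assume "phi x = phi y"
  then show "qcls Q smul x = qcls Q smul y" by (simp add: qcls_eq x y)
qed

lemma qmult: assumes x: "x \<in> carrier Q" and y: "y \<in> carrier Q"
  shows "qcls Q smul x \<otimes>\<^bsub>qquot Q smul\<^esub> qcls Q smul y = qcls Q smul (x \<otimes> y)"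
proof -
  define a where "a = (SOME a. a \<in> qcls Q smul x)"
  define b where "b = (SOME b. b \<in> qcls Q smul y)"
  have a: "a \<in> qcls Q smul x" unfolding a_def using qcls_mem[OF x] by (rule someI)
  have b: "b \<in> qcls Q smul y" unfolding b_def using qcls_mem[OF y] by (rule someI)
  have ac: "a \<in> carrier Q" "phi a = phi x" using a qcls_eq[OF x] by auto
  have bc: "b \<in> carrier Q" "phi b = phi y" using b qcls_eq[OF y] by auto
  have "qcls Q smul (a \<otimes> b) = qcls Q smul (x \<otimes> y)"
    using qcls_eq_iff ac bc x y phi_mult by simp
  then show ?thesis unfolding qquot_def a_def b_def by simp
qed

lemma qcar: "carrier (qquot Q smul) = qcls Q smul ` carrier Q"
  unfolding qquot_def by simp
lemma qone: "\<one>\<^bsub>qquot Q smul\<^esub> = qcls Q smul \<one>"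
  unfolding qquot_def by simp

lemma qgroup: "comm_group (qquot Q smul)"
proof (rule comm_groupI)
  fix A assume "A \<in> carrier (qquot Q smul)"
  then obtain x where x: "x \<in> carrier Q" and A: "A = qcls Q smul x" by (auto simp: qcar)
  have "phi (P (\<lambda>e. - phi x e) \<otimes> x) = phi \<one>"
  proof -
    from phi[OF x] have k: "phi x \<in> E \<rightarrow>\<^sub>E (UNIV :: int set)" by blast
    have "phi (P (\<lambda>e. - phi x e) \<otimes> x) = (\<lambda>e\<in>E. phi (P (\<lambda>e. - phi x e)) e + phi x e)"
      using phi_mult P_closed x by blast
    also have "\<dots> = (\<lambda>e\<in>E. 0)" using phi_P by auto
    finally show ?thesis using phi_one by simp
  qed
  then have "qcls Q smul (P (\<lambda>e. - phi x e)) \<otimes>\<^bsub>qquot Q smul\<^esub> A = \<one>\<^bsub>qquot Q smul\<^esub>"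
    using A qmult P_closed x qone qcls_eq_iff by simp
  then show "\<exists>y\<in>carrier (qquot Q smul). y \<otimes>\<^bsub>qquot Q smul\<^esub> A = \<one>\<^bsub>qquot Q smul\<^esub>"
    using P_closed qcar by blast
next
  fix A B assume "A \<in> carrier (qquot Q smul)" "B \<in> carrier (qquot Q smul)"
  then obtain x y where "x \<in> carrier Q" "y \<in> carrier Q" "A = qcls Q smul x" "B = qcls Q smul y"
    by (auto simp: qcar)
  then show "A \<otimes>\<^bsub>qquot Q smul\<^esub> B \<in> carrier (qquot Q smul)"
    and "A \<otimes>\<^bsub>qquot Q smul\<^esub> B = B \<otimes>\<^bsub>qquot Q smul\<^esub> A"
    by (simp_all add: qmult qcar m_comm)
next
  show "\<one>\<^bsub>qquot Q smul\<^esub> \<in> carrier (qquot Q smul)" by (simp add: qcar qone)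
next
  fix A assume "A \<in> carrier (qquot Q smul)"
  then obtain x where "x \<in> carrier Q" "A = qcls Q smul x" by (auto simp: qcar)
  then show "\<one>\<^bsub>qquot Q smul\<^esub> \<otimes>\<^bsub>qquot Q smul\<^esub> A = A" by (simp add: qmult qone)
next
  fix A B C assume "A \<in> carrier (qquot Q smul)" "B \<in> carrier (qquot Q smul)" "C \<in> carrier (qquot Q smul)"
  then obtain x y z where "x \<in> carrier Q" "y \<in> carrier Q" "z \<in> carrier Q"
    "A = qcls Q smul x" "B = qcls Q smul y" "C = qcls Q smul z"
    by (auto simp: qcar)
  then show "A \<otimes>\<^bsub>qquot Q smul\<^esub> B \<otimes>\<^bsub>qquot Q smul\<^esub> C = A \<otimes>\<^bsub>qquot Q smul\<^esub> (B \<otimes>\<^bsub>qquot Q smul\<^esub> C)"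
    by (simp add: qmult m_assoc)
qed

interpretation G: comm_group "qquot Q smul" by (rule qgroup)

lemma unat_Units: "u \<in> Units Q \<Longrightarrow> u [^]\<^bsub>Q\<^esub> (n::nat) \<in> Units Q"
  using U.nat_pow_closed[of u n] by (simp add: units_of_carrier pow_nat_units)

lemma qcls_car: "x \<in> carrier Q \<Longrightarrow> qcls Q smul x \<in> carrier (qquot Q smul)"
  by (simp add: qcar)

lemma qpow_nat: assumes "u \<in> carrier Q"
  shows "qcls Q smul (u [^]\<^bsub>Q\<^esub> (n::nat)) = qcls Q smul u [^]\<^bsub>qquot Q smul\<^esub> n"
proof (induction n)
  case 0 then show ?case by (simp add: qone)
next
  case (Suc n)
  have "qcls Q smul (u [^]\<^bsub>Q\<^esub> n \<otimes> u) = qcls Q smul (u [^]\<^bsub>Q\<^esub> n) \<otimes>\<^bsub>qquot Q smul\<^esub> qcls Q smul u"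
    using qmult[OF nat_pow_closed[OF assms] assms] by simp
  then show ?case using Suc.IH by simp
qed

lemma qinv: assumes u: "u \<in> Units Q"
  shows "qcls Q smul (inv u) = inv\<^bsub>qquot Q smul\<^esub> (qcls Q smul u)"
proof -
  have uc: "u \<in> carrier Q" "inv u \<in> carrier Q" using u by auto
  have "qcls Q smul (inv u) \<otimes>\<^bsub>qquot Q smul\<^esub> qcls Q smul u = \<one>\<^bsub>qquot Q smul\<^esub>"
    using qmult[OF uc(2) uc(1)] u by (simp add: qone)
  then show ?thesis using G.inv_equality qcls_car uc by metis
qed

lemma qpow_int: assumes u: "u \<in> Units Q"
  shows "qcls Q smul (u [^]\<^bsub>Q\<^esub> (i::int)) = qcls Q smul u [^]\<^bsub>qquot Q smul\<^esub> i"
proof -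
  have uc: "u \<in> carrier Q" using u by auto
  have a: "qcls Q smul (u [^]\<^bsub>Q\<^esub> (n::nat)) = qcls Q smul u [^]\<^bsub>qquot Q smul\<^esub> n" for n
    by (rule qpow_nat[OF uc])
  have b: "qcls Q smul (inv (u [^]\<^bsub>Q\<^esub> (n::nat))) = inv\<^bsub>qquot Q smul\<^esub> (qcls Q smul u [^]\<^bsub>qquot Q smul\<^esub> n)" for n
    using qinv[OF unat_Units[OF u, of n]] a by simp
  show ?thesis unfolding int_pow_def2 using a b by (simp del: pow_nat)
qed

lemma qfinprod: assumes "finite A"
  shows "f \<in> A \<rightarrow> carrier Q \<Longrightarrow> qcls Q smul (finprod Q f A) = finprod (qquot Q smul) (\<lambda>a. qcls Q smul (f a)) A"
  using assms
proof (induction A rule: finite_induct)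
  case empty then show ?case by (simp add: qone)
next
  case (insert a A)
  have fa: "f a \<in> carrier Q" and fA: "f \<in> A \<rightarrow> carrier Q" using insert.prems by auto
  have gA: "(\<lambda>a. qcls Q smul (f a)) \<in> A \<rightarrow> carrier (qquot Q smul)" using fA qcls_car by blast
  have "qcls Q smul (finprod Q f (insert a A)) = qcls Q smul (f a \<otimes> finprod Q f A)"
    using insert fa fA by simp
  also have "\<dots> = qcls Q smul (f a) \<otimes>\<^bsub>qquot Q smul\<^esub> qcls Q smul (finprod Q f A)"
    using qmult fa fA by simp
  also have "\<dots> = finprod (qquot Q smul) (\<lambda>a. qcls Q smul (f a)) (insert a A)"
    using insert fA gA qcls_car[OF fa] by simp
  finally show ?case .
qed

lemma qP: "qcls Q smul (P k) = finprod (qquot Q smul) (\<lambda>e. qcls Q smul e [^]\<^bsub>qquot Q smul\<^esub> k e) E"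
proof -
  have "qcls Q smul (P k) = finprod (qquot Q smul) (\<lambda>e. qcls Q smul (e [^]\<^bsub>Q\<^esub> k e)) E"
    unfolding P_def using qfinprod[OF finE fun_car] .
  also have "\<dots> = finprod (qquot Q smul) (\<lambda>e. qcls Q smul e [^]\<^bsub>qquot Q smul\<^esub> k e) E"
  proof (rule G.finprod_cong'[OF refl])
    have c: "\<And>e. e \<in> E \<Longrightarrow> qcls Q smul e \<in> carrier (qquot Q smul)" using qcls_car Ecar by blast
    then show "(\<lambda>e. qcls Q smul e [^]\<^bsub>qquot Q smul\<^esub> k e) \<in> E \<rightarrow> carrier (qquot Q smul)"
      by (simp add: Pi_def)
    fix e assume "e \<in> E"
    then show "qcls Q smul (e [^]\<^bsub>Q\<^esub> k e) = qcls Q smul e [^]\<^bsub>qquot Q smul\<^esub> k e"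
      using qpow_int EU by blast
  qed
  finally show ?thesis .
qed

lemma phi_E: "e \<in> E \<Longrightarrow> phi e = (\<lambda>x\<in>E. if x = e then 1 else 0)"
  using phi_P[of "\<lambda>x. if x = e then 1 else 0"] P_delta by simp

lemma inj_qcls: "inj_on (qcls Q smul) E"
proof (rule inj_onI)
  fix e e' assume e: "e \<in> E" and e': "e' \<in> E" and eq: "qcls Q smul e = qcls Q smul e'"
  then have "phi e = phi e'" using qcls_eq_iff Ecar by blast
  then have "phi e e = phi e' e" by simp
  then show "e = e'" using phi_E e e' by (simp split: if_splits)
qed

lemma reindex:
  "finprod (qquot Q smul) (\<lambda>b. b [^]\<^bsub>qquot Q smul\<^esub> (k b :: int)) (qcls Q smul ` E)
     = qcls Q smul (P (\<lambda>e. k (qcls Q smul e)))"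
proof -
  have "(\<lambda>b. b [^]\<^bsub>qquot Q smul\<^esub> (k b :: int)) \<in> qcls Q smul ` E \<rightarrow> carrier (qquot Q smul)"
    using qcls_car Ecar by auto
  from G.finprod_reindex[OF this inj_qcls]
  have "finprod (qquot Q smul) (\<lambda>b. b [^]\<^bsub>qquot Q smul\<^esub> (k b :: int)) (qcls Q smul ` E)
     = finprod (qquot Q smul) (\<lambda>e. qcls Q smul e [^]\<^bsub>qquot Q smul\<^esub> (k (qcls Q smul e))) E" .
  also have "\<dots> = qcls Q smul (P (\<lambda>e. k (qcls Q smul e)))" by (rule qP[symmetric])
  finally show ?thesis .
qed

lemma main: "group_basis (qquot Q smul) (qcls Q smul ` E) \<and> card (qcls Q smul ` E) = card E"
proof -
  let ?B = "qcls Q smul ` E"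
  let ?R = "\<lambda>g k. k \<in> ?B \<rightarrow>\<^sub>E (UNIV :: int set) \<and>
         g = finprod (qquot Q smul) (\<lambda>b. b [^]\<^bsub>qquot Q smul\<^esub> (k b :: int)) ?B"
  have ex: "\<exists>!k. ?R g k" if g: "g \<in> carrier (qquot Q smul)" for g
  proof -
    obtain x where x: "x \<in> carrier Q" and gx: "g = qcls Q smul x" using g by (auto simp: qcar)
    have px: "phi x \<in> E \<rightarrow>\<^sub>E (UNIV :: int set)" using phi[OF x] by blast
    define k0 where "k0 = (\<lambda>b\<in>?B. phi x (inv_into E (qcls Q smul) b))"
    have k0e: "k0 (qcls Q smul e) = phi x e" if "e \<in> E" for e
      unfolding k0_def using that inv_into_f_f[OF inj_qcls that] by simp
    have "phi (P (\<lambda>e. k0 (qcls Q smul e))) = phi x"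
    proof -
      have "phi (P (\<lambda>e. k0 (qcls Q smul e))) = (\<lambda>e\<in>E. k0 (qcls Q smul e))" by (rule phi_P)
      also have "\<dots> = (\<lambda>e\<in>E. phi x e)" using k0e by (simp cong: restrict_cong)
      also have "\<dots> = phi x" using px by simp
      finally show ?thesis .
    qed
    then have "qcls Q smul (P (\<lambda>e. k0 (qcls Q smul e))) = qcls Q smul x"
      by (rule qcls_eq_iff[OF P_closed x, THEN iffD2])
    then have gq: "g = qcls Q smul (P (\<lambda>e. k0 (qcls Q smul e)))"
      using gx by simp
    have k0P: "k0 \<in> ?B \<rightarrow>\<^sub>E (UNIV :: int set)" unfolding k0_def by simp
    have R0: "?R g k0" using k0P gq reindex[of k0] by simp
    show ?thesis
    proof (rule ex1I[of _ k0])
      show "?R g k0" by (rule R0)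
    next
      fix k assume Rk: "?R g k"
      have "g = qcls Q smul (P (\<lambda>e. k (qcls Q smul e)))"
        using Rk reindex[of k] by simp
      then have "qcls Q smul (P (\<lambda>e. k (qcls Q smul e))) = qcls Q smul (P (\<lambda>e. k0 (qcls Q smul e)))"
        using gq by simp
      then have "phi (P (\<lambda>e. k (qcls Q smul e))) = phi (P (\<lambda>e. k0 (qcls Q smul e)))"
        using qcls_eq_iff[OF P_closed P_closed] by simp
      then have eqE: "(\<lambda>e\<in>E. k (qcls Q smul e)) = (\<lambda>e\<in>E. k0 (qcls Q smul e))"
        by (simp add: phi_P)
      show "k = k0"
      proof (rule PiE_ext)
        show "k \<in> ?B \<rightarrow>\<^sub>E (UNIV :: int set)" using Rk by blast
        show "k0 \<in> ?B \<rightarrow>\<^sub>E (UNIV :: int set)" by (rule k0P)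
        fix b assume "b \<in> ?B"
        then obtain e where e: "e \<in> E" "b = qcls Q smul e" by blast
        have "(\<lambda>e\<in>E. k (qcls Q smul e)) e = (\<lambda>e\<in>E. k0 (qcls Q smul e)) e" using eqE by simp
        then show "k b = k0 b" using e by simp
      qed
    qed
  qed
  have all: "\<forall>g\<in>carrier (qquot Q smul). \<exists>!k. ?R g k" by (intro ballI) (rule ex)
  have sub: "?B \<subseteq> carrier (qquot Q smul)" using qcls_car Ecar by blast
  have fin: "finite ?B" using finE by simp
  have "group_basis (qquot Q smul) ?B"
    unfolding group_basis_def by (rule conjI[OF fin conjI[OF sub all]])
  then show ?thesis using card_image[OF inj_qcls] by simp
qed

end

theorem proposition3p19:
  fixes Q :: "'q monoid" and smul :: "'k::field \<Rightarrow> 'q \<Rightarrow> 'q" and E :: "'q set"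
  assumes "quantity_space Q smul"
    and "qs_basis Q smul E"
  shows "group_basis (qquot Q smul) (qcls Q smul ` E) \<and> card (qcls Q smul ` E) = card E"
proof -
  interpret qsp Q smul E
    using assms unfolding quantity_space_def qsp_def qsp_axioms_def by blast
  show ?thesis by (rule main)
qed

end
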